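(* Consider the heterogeneous database model described in the context, with $P(R\in\mathcal D)>0$, and let $0<\alpha_1,\alpha_2\le1$. (a) Let $t_{j,\alpha_j}$ be the largest $t\ge0$ with $P(LR_j(S_j)\ge t)\ge\alpha_j$ ($j=1,2$), and $\mathcal D_{\alpha_1,\alpha_2}=\{i\in\mathcal D_1: LR_1(P_i)\ge t_{1,\alpha_1}\}\cup\{i\in\mathcal D_2: LR_2(P_i)\ge t_{2,\alpha_2}\}$. Then \[ P(R\in\mathcal D_{\alpha_1,\alpha_2}\mid R\in\mathcal D)\ge\alpha_1P(R\in\mathcal D_1\mid R\in\mathcal D)+\alpha_2P(R\in\mathcal D_2\mid R\in\mathcal D). \] (b) Let $\mathcal D^{\alpha_1,\alpha_2}=\mathcal D_1^{\alpha_1}\cup\mathcal D_2^{\alpha_2}$, where for $j=1,2$ with $P(R\in\mathcal D_j)>0$, $\mathcal D_j^{\alpha_j}$ is obtained by applying the following construction to the indices in $\mathcal D_j$ alone: order the indices $i\in\mathcal D_j$ by decreasing $r_i\pi_i$ (with $r_i=LR_j(P_i)$ and a fixed tie-breaking rule), and take the smallest initial segment whose sum of $r_i\pi_i$ is at least $\alpha_j\sum_{i\in\mathcal D_j}r_i\pi_i$ (if $P(R\in\mathcal D_j)=0$ the corresponding term below is $0$). Then the same lower bound holds: \[ P(R\in\mathcal D^{\alpha_1,\alpha_2}\mid R\in\mathcal D)\ge\alpha_1P(R\in\mathcal D_1\mid R\in\mathcal D)+\alpha_2P(R\in\mathcal D_2\mid R\in\mathcal D). \]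
   Context: Let $E_1,E_2$ be countable sets and for $j=1,2$ let $S_j,G_j$ be $E_j$-valued random variables with $P(S_j=e)>0\Rightarrow P(G_j=e)>0$ for all $e\in E_j$; define $LR_j(e)=P(S_j=e)/P(G_j=e)$ if $P(G_j=e)>0$ and $0$ otherwise. Fix $N\ge1$ and a partition $\{1,\dots,N\}=\mathcal D_1\sqcup\mathcal D_2$; write $\mathcal D=\{1,\dots,N\}$. Let $R$ be a random variable with values in $\{0,1,\dots,N\}$ ($R=0$ meaning $R\notin\mathcal D$), with $\pi_i=P(R=i)$. There are random variables $P_1,\dots,P_N$, with $P_i$ taking values in $E_j$ when $i\in\mathcal D_j$, such that conditionally on $R=k$ ($0\le k\le N$) the $P_i$ are independent, $P_i$ has the distribution of $S_j$ if $i=k\in\mathcal D_j$ and of $G_j$ if $i\ne k$, $i\in\mathcal D_j$. *)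

theory Defs
  imports "HOL-Probability.Probability"
begin

definition LR :: "'a pmf \<Rightarrow> 'a pmf \<Rightarrow> 'a \<Rightarrow> real" where
  "LR S G e = (if pmf G e > 0 then pmf S e / pmf G e else 0)"

definition LRsum :: "'a pmf \<Rightarrow> 'a pmf \<Rightarrow> 'b pmf \<Rightarrow> 'b pmf \<Rightarrow> 'a + 'b \<Rightarrow> real" where
  "LRsum S1 G1 S2 G2 v = (case v of Inl e \<Rightarrow> LR S1 G1 e | Inr e \<Rightarrow> LR S2 G2 e)"

text \<open>Distribution of P_i given R = k (values embedded into E1 + E2).\<close>
definition cond_dist ::
  "nat set \<Rightarrow> 'a pmf \<Rightarrow> 'a pmf \<Rightarrow> 'b pmf \<Rightarrow> 'b pmf \<Rightarrow> nat \<Rightarrow> nat \<Rightarrow> ('a + 'b) pmf" where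
  "cond_dist D1 S1 G1 S2 G2 k i =
     (if i \<in> D1 then map_pmf Inl (if i = k then S1 else G1)
      else map_pmf Inr (if i = k then S2 else G2))"

text \<open>Joint law of (R, (P_1,...,P_N)): given R = k, the P_i (i = 1..N) are independent
  with the distributions above.  Outside {1..N} the function is the dummy value undefined.\<close>
definition joint ::
  "nat \<Rightarrow> nat set \<Rightarrow> nat pmf \<Rightarrow> 'a pmf \<Rightarrow> 'a pmf \<Rightarrow> 'b pmf \<Rightarrow> 'b pmf
     \<Rightarrow> (nat \<times> (nat \<Rightarrow> 'a + 'b)) pmf" where
  "joint N D1 R S1 G1 S2 G2 =
     do { k \<leftarrow> R;
          x \<leftarrow> Pi_pmf {1..N} undefined (cond_dist D1 S1 G1 S2 G2 k);
          return_pmf (k, x) }"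

definition threshold :: "'a pmf \<Rightarrow> 'a pmf \<Rightarrow> real \<Rightarrow> real" where
  "threshold S G \<alpha> =
     (GREATEST t. t \<ge> 0 \<and> measure_pmf.prob S {e. LR S G e \<ge> t} \<ge> \<alpha>)"

definition prec :: "(nat \<Rightarrow> real) \<Rightarrow> (nat \<Rightarrow> nat) \<Rightarrow> nat \<Rightarrow> nat \<Rightarrow> bool" where
  "prec w tb i i' \<longleftrightarrow> w i > w i' \<or> (w i = w i' \<and> tb i < tb i')"

definition initial_segments :: "nat set \<Rightarrow> (nat \<Rightarrow> real) \<Rightarrow> (nat \<Rightarrow> nat) \<Rightarrow> nat set set" where
  "initial_segments D w tb = insert {} ((\<lambda>i. {i' \<in> D. prec w tb i' i \<or> i' = i}) ` D)"

definition top_segment :: "nat set \<Rightarrow> (nat \<Rightarrow> real) \<Rightarrow> (nat \<Rightarrow> nat) \<Rightarrow> real \<Rightarrow> nat set" where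
  "top_segment D w tb \<alpha> =
     (ARG_MIN card I. I \<in> initial_segments D w tb \<and> \<alpha> * sum w D \<le> sum w I)"

end

theory Submission
  imports Defs
begin


lemma LR_nonneg: "LR S G e \<ge> 0"
  unfolding LR_def by auto

lemma LRsum_nonneg: "LRsum S1 G1 S2 G2 v \<ge> 0"
  unfolding LRsum_def by (auto split: sum.splits intro: LR_nonneg)

lemma LR_pmf: assumes "\<And>e. pmf S e > 0 \<Longrightarrow> pmf G e > 0"
  shows "pmf S e = pmf G e * LR S G e"
proof (cases "pmf G e > 0")
  case True thus ?thesis unfolding LR_def by simp
next
  case False
  hence "pmf G e = 0" using pmf_nonneg[of G e] by linarith
  moreover have "pmf S e = 0" using assms False by (meson not_less order.not_eq_order_implies_strict pmf_nonneg)
  ultimately show ?thesis by simp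
qed

lemma last_elem:
  fixes w :: "nat \<Rightarrow> real"
  assumes "finite D" "D \<noteq> {}" "inj_on tb D"
  shows "\<exists>i\<in>D. \<forall>i'\<in>D. prec w tb i' i \<or> i' = i"
proof -
  define m where "m = Min (w ` D)"
  define D' where "D' = {i\<in>D. w i = m}"
  have "m \<in> w ` D" unfolding m_def using assms by simp
  hence "D' \<noteq> {}" unfolding D'_def by auto
  have fD': "finite D'" unfolding D'_def using assms by simp
  define t where "t = Max (tb ` D')"
  have "t \<in> tb ` D'" unfolding t_def using fD' \<open>D' \<noteq> {}\<close> by simp
  then obtain i where i: "i \<in> D'" "tb i = t" by auto
  show ?thesis
  proof (intro bexI ballI)
    show "i \<in> D" using i D'_def by auto
    fix i' assume i': "i' \<in> D"
    have wi: "w i = m" using i D'_def by auto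
    have "w i' \<ge> m" unfolding m_def using assms i' by simp
    show "prec w tb i' i \<or> i' = i"
    proof (cases "w i' > m")
      case True thus ?thesis unfolding prec_def wi by simp
    next
      case False
      hence "w i' = m" using \<open>w i' \<ge> m\<close> by simp
      hence "i' \<in> D'" using i' D'_def by auto
      hence "tb i' \<le> t" unfolding t_def using fD' by simp
      moreover have "tb i' = tb i \<Longrightarrow> i' = i" using assms(3) i' \<open>i \<in> D\<close> inj_on_def by metis
      ultimately show ?thesis unfolding prec_def using wi \<open>w i' = m\<close> i by force
    qed
  qed
qed

lemma top_segment_prop:
  fixes w :: "nat \<Rightarrow> real"
  assumes "finite D" "inj_on tb D" "\<And>i. i \<in> D \<Longrightarrow> w i \<ge> 0" "\<alpha> \<le> 1"
  shows "top_segment D w tb \<alpha> \<subseteq> D \<and> \<alpha> * sum w D \<le> sum w (top_segment D w tb \<alpha>)"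
proof -
  have s0: "sum w D \<ge> 0" using assms by (simp add: sum_nonneg)
  have ex: "\<exists>I. I \<in> initial_segments D w tb \<and> \<alpha> * sum w D \<le> sum w I"
  proof (cases "D = {}")
    case True thus ?thesis unfolding initial_segments_def by auto
  next
    case False
    then obtain i where i: "i\<in>D" "\<forall>i'\<in>D. prec w tb i' i \<or> i' = i"
      using last_elem assms by blast
    hence "{i' \<in> D. prec w tb i' i \<or> i' = i} = D" by auto
    hence "D \<in> initial_segments D w tb" unfolding initial_segments_def using i(1) by (metis (no_types, lifting) image_eqI insertI2)
    moreover have "\<alpha> * sum w D \<le> sum w D" using mult_right_mono[of \<alpha> 1 "sum w D"] s0 assms(4) by simp
    ultimately show ?thesis by blast
  qed
  then obtain I where "I \<in> initial_segments D w tb \<and> \<alpha> * sum w D \<le> sum w I" by blast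
  hence "top_segment D w tb \<alpha> \<in> initial_segments D w tb \<and> \<alpha> * sum w D \<le> sum w (top_segment D w tb \<alpha>)"
    unfolding top_segment_def by (rule arg_min_natI)
  moreover have "\<forall>I\<in>initial_segments D w tb. I \<subseteq> D" unfolding initial_segments_def by auto
  ultimately show ?thesis by blast
qed




lemma threshold_prop:
  fixes S G :: "'a pmf" and \<alpha> :: real
  assumes a: "0 < \<alpha>" "\<alpha> \<le> 1"
  shows "measure_pmf.prob S {e. LR S G e \<ge> threshold S G \<alpha>} \<ge> \<alpha>"
proof -
  define F where "F t = measure_pmf.prob S {e. LR S G e \<ge> t}" for t
  have mono: "F t \<le> F s" if "s \<le> t" for s t
    unfolding F_def using that by (intro measure_pmf.finite_measure_mono) auto
  have F0: "F 0 = 1" unfolding F_def using LR_nonneg[of S G] by simp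
  have lim0: "(\<lambda>n. F (real n)) \<longlonglongrightarrow> 0"
  proof -
    have "(\<lambda>n. measure_pmf.prob S {e. LR S G e \<ge> real n}) \<longlonglongrightarrow> measure_pmf.prob S (\<Inter>n. {e. LR S G e \<ge> real n})"
      by (intro measure_pmf.finite_Lim_measure_decseq) (auto simp: decseq_def)
    moreover have "(\<Inter>n. {e. LR S G e \<ge> real n}) = {}"
    proof -
      have "\<not> (\<forall>n. LR S G e \<ge> real n)" for e
        by (metis not_le reals_Archimedean2)
      thus ?thesis by auto
    qed
    ultimately show ?thesis unfolding F_def by simp
  qed
  then obtain b where b: "F (real b) < \<alpha>"
    using a(1) by (metis LIMSEQ_le_const not_less order_refl)
  define M where "M = {t. t \<ge> 0 \<and> F t \<ge> \<alpha>}"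
  have "0 \<in> M" unfolding M_def using F0 a by simp
  have bdd: "t \<le> real b" if "t \<in> M" for t
  proof (rule ccontr)
    assume "\<not> t \<le> real b"
    hence "F t \<le> F (real b)" by (intro mono) simp
    thus False using that b unfolding M_def by simp
  qed
  define s where "s = Sup M"
  have bddM: "bdd_above M" using bdd by (auto simp: bdd_above_def)
  have Mne: "M \<noteq> {}" using \<open>0 \<in> M\<close> by auto
  have ub: "t \<le> s" if "t \<in> M" for t unfolding s_def using bddM that by (simp add: cSup_upper)
  have s0: "s \<ge> 0" using ub \<open>0 \<in> M\<close> by simp
  have Fs: "F s \<ge> \<alpha>"
  proof -
    define B where "B n = {e. LR S G e \<ge> s - 1 / (real n + 1)}" for n
    have "(\<lambda>n. measure_pmf.prob S (B n)) \<longlonglongrightarrow> measure_pmf.prob S (\<Inter>n. B n)"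
    proof (intro measure_pmf.finite_Lim_measure_decseq)
      show "decseq B" unfolding decseq_def B_def
      proof (intro allI impI subsetI)
        fix m n :: nat and e assume "m \<le> n" "e \<in> {e. s - 1 / (real n + 1) \<le> LR S G e}"
        moreover have "1 / (real n + 1) \<le> 1 / (real m + 1)" using \<open>m \<le> n\<close> by (simp add: frac_le)
        ultimately show "e \<in> {e. s - 1 / (real m + 1) \<le> LR S G e}" by simp
      qed
    qed auto
    moreover have "(\<Inter>n. B n) = {e. LR S G e \<ge> s}"
    proof (rule set_eqI, rule iffI)
      fix e assume e: "e \<in> (\<Inter>n. B n)"
      show "e \<in> {e. LR S G e \<ge> s}"
      proof (rule ccontr)
        assume "e \<notin> {e. LR S G e \<ge> s}"
        hence "s - LR S G e > 0" by simp
        then obtain n where n: "1 / (real n + 1) < s - LR S G e"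
          by (metis add.commute nat_approx_posE of_nat_Suc)
        moreover have "s - 1 / (real n + 1) \<le> LR S G e" using e unfolding B_def by auto
        ultimately show False by linarith
      qed
    next
      fix e assume "e \<in> {e. LR S G e \<ge> s}"
      thus "e \<in> (\<Inter>n. B n)" unfolding B_def by (auto intro: order.trans[rotated])
    qed
    moreover have "measure_pmf.prob S (B n) \<ge> \<alpha>" for n
    proof -
      have "s - 1 / (real n + 1) < s" by simp
      then obtain t where t: "t \<in> M" "s - 1 / (real n + 1) < t"
        using less_cSup_iff[OF Mne bddM] unfolding s_def by blast
      have "\<alpha> \<le> F t" using t M_def by simp
      also have "\<dots> \<le> F (s - 1 / (real n + 1))" using t by (intro mono) simp
      finally show ?thesis unfolding F_def B_def .
    qed
    ultimately show ?thesis unfolding F_def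
      by (metis (no_types, lifting) LIMSEQ_le_const)
  qed
  have "s \<in> M" unfolding M_def using s0 Fs by simp
  have "threshold S G \<alpha> = s"
    unfolding threshold_def
    by (rule Greatest_equality) (use \<open>s \<in> M\<close> ub in \<open>auto simp: M_def F_def\<close>)
  thus ?thesis using Fs unfolding F_def by simp
qed




lemma if_mult: "(if c then a * l else 0) = (if c then a else (0::real)) * l" by simp

locale hsetup =
  fixes N :: nat and D1 D2 :: "nat set" and R :: "nat pmf"
    and S1 G1 :: "'a pmf" and S2 G2 :: "'b pmf"
  assumes part: "D1 \<union> D2 = {1..N}" "D1 \<inter> D2 = {}"
    and Rrange: "set_pmf R \<subseteq> {0..N}"
    and supp1: "\<And>e. pmf S1 e > 0 \<Longrightarrow> pmf G1 e > 0"
    and supp2: "\<And>e. pmf S2 e > 0 \<Longrightarrow> pmf G2 e > 0"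
begin

definition P where "P k = Pi_pmf {1..N} undefined (cond_dist D1 S1 G1 S2 G2 k)"
abbreviation "LRv \<equiv> LRsum S1 G1 S2 G2"

lemma J_eq: "joint N D1 R S1 G1 S2 G2 = bind_pmf R (\<lambda>k. map_pmf (Pair k) (P k))"
  unfolding joint_def P_def map_pmf_def by simp

lemma cd_point: assumes "k \<in> {1..N}"
  shows "pmf (cond_dist D1 S1 G1 S2 G2 k k) v = pmf (cond_dist D1 S1 G1 S2 G2 0 k) v * LRv v"
proof -
  have k0: "k \<noteq> 0" using assms by simp
  show ?thesis
  proof (cases "k \<in> D1")
    case True
    show ?thesis
    proof (cases v)
      case (Inl e)
      thus ?thesis using True k0 LR_pmf[where e=e, OF supp1]
        by (simp add: cond_dist_def pmf_map_inj' LRsum_def)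
    next
      case (Inr e)
      have "pmf (map_pmf Inl S1) (Inr e) = 0" "pmf (map_pmf Inl G1) (Inr e) = 0"
        by (auto intro!: pmf_map_outside)
      thus ?thesis using True k0 Inr by (simp add: cond_dist_def)
    qed
  next
    case False
    show ?thesis
    proof (cases v)
      case (Inr e)
      thus ?thesis using False k0 LR_pmf[where e=e, OF supp2]
        by (simp add: cond_dist_def pmf_map_inj' LRsum_def)
    next
      case (Inl e)
      have "pmf (map_pmf Inr S2) (Inl e) = 0" "pmf (map_pmf Inr G2) (Inl e) = 0"
        by (auto intro!: pmf_map_outside)
      thus ?thesis using False k0 Inl by (simp add: cond_dist_def)
    qed
  qed
qed

lemma pmf_Pk: assumes k: "k \<in> {1..N}"
  shows "pmf (P k) x = pmf (P 0) x * LRv (x k)"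
proof -
  have eq: "cond_dist D1 S1 G1 S2 G2 k l = cond_dist D1 S1 G1 S2 G2 0 l" if "l \<in> {1..N} - {k}" for l
    using that by (auto simp: cond_dist_def)
  have "(\<Prod>l\<in>{1..N}. pmf (cond_dist D1 S1 G1 S2 G2 k l) (x l))
      = pmf (cond_dist D1 S1 G1 S2 G2 k k) (x k) * (\<Prod>l\<in>{1..N}-{k}. pmf (cond_dist D1 S1 G1 S2 G2 k l) (x l))"
    using k by (simp add: prod.remove)
  also have "\<dots> = pmf (cond_dist D1 S1 G1 S2 G2 0 k) (x k) * LRv (x k) * (\<Prod>l\<in>{1..N}-{k}. pmf (cond_dist D1 S1 G1 S2 G2 0 l) (x l))"
    using cd_point[OF k] eq by simp
  also have "\<dots> = (\<Prod>l\<in>{1..N}. pmf (cond_dist D1 S1 G1 S2 G2 0 l) (x l)) * LRv (x k)"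
    using k by (simp add: prod.remove)
  finally have eq2: "(\<Prod>l\<in>{1..N}. pmf (cond_dist D1 S1 G1 S2 G2 k l) (x l)) = (\<Prod>l\<in>{1..N}. pmf (cond_dist D1 S1 G1 S2 G2 0 l) (x l)) * LRv (x k)" .
  show ?thesis unfolding P_def pmf_Pi[OF finite_atLeastAtMost]
    unfolding eq2 by (rule if_mult)
qed

lemma density: assumes k: "k \<in> {1..N}"
  shows "emeasure (P k) B = (\<integral>\<^sup>+x. ennreal (indicator B x * LRv (x k)) \<partial>P 0)"
proof -
  have "emeasure (P k) B = (\<integral>\<^sup>+x. indicator B x \<partial>P k)" by simp
  also have "\<dots> = (\<integral>\<^sup>+x. ennreal (pmf (P k) x) * indicator B x \<partial>count_space UNIV)"
    by (rule nn_integral_measure_pmf)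
  also have "\<dots> = (\<integral>\<^sup>+x. ennreal (pmf (P 0) x) * ennreal (indicator B x * LRv (x k)) \<partial>count_space UNIV)"
    using pmf_Pk[OF k] ennreal_mult[OF pmf_nonneg LRsum_nonneg]
    by (intro nn_integral_cong) (auto simp: indicator_def)
  also have "\<dots> = (\<integral>\<^sup>+x. ennreal (indicator B x * LRv (x k)) \<partial>P 0)"
    by (rule nn_integral_measure_pmf[symmetric])
  finally show ?thesis .
qed

lemma emJ: "emeasure (joint N D1 R S1 G1 S2 G2) A
   = (\<Sum>k\<in>{0..N}. emeasure (P k) {x. (k, x) \<in> A} * ennreal (pmf R k))"
proof -
  have "(\<lambda>k. emeasure (P k) (Pair k -` A)) = (\<lambda>k. emeasure (P k) {x. (k, x) \<in> A})"
    by (auto simp: vimage_def)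
  thus ?thesis
  unfolding J_eq emeasure_bind_pmf emeasure_map_pmf
  by (simp only:) (rule nn_integral_measure_pmf_support, use Rrange in auto)
qed

lemma mJ: "measure (joint N D1 R S1 G1 S2 G2) A
   = (\<Sum>k\<in>{0..N}. measure (P k) {x. (k, x) \<in> A} * pmf R k)"
proof -
  have "ennreal (measure (joint N D1 R S1 G1 S2 G2) A) = ennreal (\<Sum>k\<in>{0..N}. measure (P k) {x. (k, x) \<in> A} * pmf R k)"
    using emJ[of A] by (simp add: measure_pmf.emeasure_eq_measure ennreal_mult sum_ennreal[symmetric] sum_nonneg)
  thus ?thesis by (simp add: sum_nonneg)
qed

end



context hsetup
begin

lemma finD: "finite D1" "finite D2" "D1 \<subseteq> {1..N}" "D2 \<subseteq> {1..N}"
proof -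
  show "D1 \<subseteq> {1..N}" "D2 \<subseteq> {1..N}" using part by auto
  thus "finite D1" "finite D2" by (auto intro: finite_subset)
qed

lemma probD: "measure_pmf.prob R D1 = (\<Sum>k\<in>D1. pmf R k)" "measure_pmf.prob R D2 = (\<Sum>k\<in>D2. pmf R k)"
  using finD by (auto simp: measure_measure_pmf_finite)

lemma sum_split:
  fixes f :: "nat \<Rightarrow> real"
  shows "(\<Sum>k\<in>{1..N}. f k) = (\<Sum>k\<in>D1. f k) + (\<Sum>k\<in>D2. f k)"
  using part finD by (metis sum.union_disjoint)

lemma marginal: assumes "k \<in> D1"
  shows "measure (P k) {x. LRv (x k) \<ge> t} = measure_pmf.prob S1 {e. LR S1 G1 e \<ge> t}"
proof -
  have k: "k \<in> {1..N}" using assms part by auto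
  have "measure (P k) {x. LRv (x k) \<ge> t} = measure (map_pmf (\<lambda>x. x k) (P k)) {v. LRv v \<ge> t}"
    by (simp add: vimage_def)
  also have "map_pmf (\<lambda>x. x k) (P k) = map_pmf Inl S1"
    unfolding P_def using k assms by (simp add: Pi_pmf_component cond_dist_def)
  finally show ?thesis by (simp add: vimage_def LRsum_def)
qed

lemma marginal2: assumes "k \<in> D2"
  shows "measure (P k) {x. LRv (x k) \<ge> t} = measure_pmf.prob S2 {e. LR S2 G2 e \<ge> t}"
proof -
  have k: "k \<in> {1..N}" "k \<notin> D1" using assms part by auto
  have "measure (P k) {x. LRv (x k) \<ge> t} = measure (map_pmf (\<lambda>x. x k) (P k)) {v. LRv v \<ge> t}"
    by (simp add: vimage_def)
  also have "map_pmf (\<lambda>x. x k) (P k) = map_pmf Inr S2"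
    unfolding P_def using k by (simp add: Pi_pmf_component cond_dist_def)
  finally show ?thesis by (simp add: vimage_def LRsum_def)
qed

lemma partA:
  assumes a1: "0 < \<alpha>1" "\<alpha>1 \<le> 1" and a2: "0 < \<alpha>2" "\<alpha>2 \<le> 1"
  shows "measure (joint N D1 R S1 G1 S2 G2)
     {(k, x). (k \<in> D1 \<and> LRv (x k) \<ge> threshold S1 G1 \<alpha>1) \<or> (k \<in> D2 \<and> LRv (x k) \<ge> threshold S2 G2 \<alpha>2)}
     \<ge> \<alpha>1 * measure_pmf.prob R D1 + \<alpha>2 * measure_pmf.prob R D2"
proof -
  define A where "A = {(k, x). (k \<in> D1 \<and> LRv (x k) \<ge> threshold S1 G1 \<alpha>1) \<or> (k \<in> D2 \<and> LRv (x k) \<ge> threshold S2 G2 \<alpha>2)}"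
  define f where "f k = measure (P k) {x. (k, x) \<in> A} * pmf R k" for k
  have fnn: "f k \<ge> 0" for k unfolding f_def by simp
  have "\<alpha>1 * measure_pmf.prob R D1 + \<alpha>2 * measure_pmf.prob R D2
      = (\<Sum>k\<in>D1. \<alpha>1 * pmf R k) + (\<Sum>k\<in>D2. \<alpha>2 * pmf R k)"
    by (simp add: probD sum_distrib_left)
  also have "\<dots> \<le> (\<Sum>k\<in>D1. f k) + (\<Sum>k\<in>D2. f k)"
  proof (intro add_mono sum_mono)
    fix k assume k: "k \<in> D1"
    hence "k \<notin> D2" using part by auto
    hence "{x. (k, x) \<in> A} = {x. LRv (x k) \<ge> threshold S1 G1 \<alpha>1}" using k unfolding A_def by auto
    hence "f k = measure_pmf.prob S1 {e. LR S1 G1 e \<ge> threshold S1 G1 \<alpha>1} * pmf R k"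
      unfolding f_def using marginal[OF k] by simp
    thus "\<alpha>1 * pmf R k \<le> f k" using threshold_prop[OF a1, of S1 G1]
      by (simp add: mult_right_mono)
  next
    fix k assume k: "k \<in> D2"
    hence "k \<notin> D1" using part by auto
    hence "{x. (k, x) \<in> A} = {x. LRv (x k) \<ge> threshold S2 G2 \<alpha>2}" using k unfolding A_def by auto
    hence "f k = measure_pmf.prob S2 {e. LR S2 G2 e \<ge> threshold S2 G2 \<alpha>2} * pmf R k"
      unfolding f_def using marginal2[OF k] by simp
    thus "\<alpha>2 * pmf R k \<le> f k" using threshold_prop[OF a2, of S2 G2]
      by (simp add: mult_right_mono)
  qed
  also have "\<dots> = (\<Sum>k\<in>{1..N}. f k)" by (rule sum_split[symmetric])
  also have "\<dots> \<le> (\<Sum>k\<in>{0..N}. f k)" using fnn by (intro sum_mono2) auto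
  also have "\<dots> = measure (joint N D1 R S1 G1 S2 G2) A" unfolding f_def by (rule mJ[symmetric])
  finally show ?thesis unfolding A_def .
qed

end



context hsetup
begin

lemma partB:
  assumes a1: "0 < \<alpha>1" "\<alpha>1 \<le> 1" and a2: "0 < \<alpha>2" "\<alpha>2 \<le> 1"
    and tb: "inj_on tb {1..N}"
  defines "T \<equiv> \<lambda>x. (if measure_pmf.prob R D1 > 0 then top_segment D1 (\<lambda>i. LRv (x i) * pmf R i) tb \<alpha>1 else {})
              \<union> (if measure_pmf.prob R D2 > 0 then top_segment D2 (\<lambda>i. LRv (x i) * pmf R i) tb \<alpha>2 else {})"
  shows "measure (joint N D1 R S1 G1 S2 G2) {(k, x). k \<in> T x}
     \<ge> \<alpha>1 * measure_pmf.prob R D1 + \<alpha>2 * measure_pmf.prob R D2"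
proof -
  define A where "A = {(k, x). k \<in> T x}"
  define b1 where "b1 = (if measure_pmf.prob R D1 > 0 then \<alpha>1 else 0)"
  define b2 where "b2 = (if measure_pmf.prob R D2 > 0 then \<alpha>2 else 0)"
  define c where "c k = (if k \<in> D1 then b1 else b2)" for k
  have b1nn: "b1 \<ge> 0" "b2 \<ge> 0" using a1 a2 unfolding b1_def b2_def by auto
  have cnn: "c k \<ge> 0" for k unfolding c_def using b1nn by auto
  define w where "w x k = LRv (x k) * pmf R k" for x k
  have wnn: "w x k \<ge> 0" for x k unfolding w_def by (intro mult_nonneg_nonneg LRsum_nonneg pmf_nonneg)
  have tbD: "inj_on tb D1" "inj_on tb D2" using tb finD by (auto intro: inj_on_subset)
  have pw: "(\<Sum>k\<in>{1..N}. c k * w x k) \<le> (\<Sum>k\<in>{1..N}. (if k \<in> T x then w x k else 0))" for x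
  proof -
    define T1 where "T1 = (if measure_pmf.prob R D1 > 0 then top_segment D1 (w x) tb \<alpha>1 else {})"
    define T2 where "T2 = (if measure_pmf.prob R D2 > 0 then top_segment D2 (w x) tb \<alpha>2 else {})"
    have Tx: "T x = T1 \<union> T2" unfolding T_def T1_def T2_def w_def by simp
    have P1: "T1 \<subseteq> D1 \<and> b1 * sum (w x) D1 \<le> sum (w x) T1"
      using top_segment_prop[OF finD(1) tbD(1), of "w x" \<alpha>1] wnn a1 unfolding T1_def b1_def by auto
    have P2: "T2 \<subseteq> D2 \<and> b2 * sum (w x) D2 \<le> sum (w x) T2"
      using top_segment_prop[OF finD(2) tbD(2), of "w x" \<alpha>2] wnn a2 unfolding T2_def b2_def by auto
    have fT: "finite T1" "finite T2" using P1 P2 finD by (auto intro: finite_subset)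
    have "(\<Sum>k\<in>{1..N}. c k * w x k) = (\<Sum>k\<in>D1. c k * w x k) + (\<Sum>k\<in>D2. c k * w x k)"
      by (rule sum_split)
    also have "\<dots> = b1 * sum (w x) D1 + b2 * sum (w x) D2"
      using part by (auto simp: c_def sum_distrib_left intro!: sum.cong)
    also have "\<dots> \<le> sum (w x) T1 + sum (w x) T2" using P1 P2 by simp
    also have "\<dots> = sum (w x) (T x)" unfolding Tx
      using P1 P2 part fT by (subst sum.union_disjoint) auto
    also have "\<dots> = (\<Sum>k\<in>{1..N}. (if k \<in> T x then w x k else 0))"
    proof -
      have "{k \<in> {1..N}. k \<in> T x} = T x" using P1 P2 finD Tx by auto
      thus ?thesis using sum.inter_filter[of "{1..N}" "w x" "\<lambda>k. k \<in> T x"] by simp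
    qed
    finally show ?thesis .
  qed
  have one: "(\<integral>\<^sup>+x. ennreal (LRv (x k)) \<partial>P 0) = 1" if "k \<in> {1..N}" for k
    using density[OF that, of UNIV] by (simp add: measure_pmf.emeasure_space_1[simplified])
  have "ennreal (\<alpha>1 * measure_pmf.prob R D1 + \<alpha>2 * measure_pmf.prob R D2)
       = ennreal (\<Sum>k\<in>{1..N}. c k * pmf R k)"
  proof -
    have "\<alpha>1 * measure_pmf.prob R D1 = b1 * measure_pmf.prob R D1"
      unfolding b1_def by (auto simp: less_le)
    moreover have "\<alpha>2 * measure_pmf.prob R D2 = b2 * measure_pmf.prob R D2"
      unfolding b2_def by (auto simp: less_le)
    moreover have "(\<Sum>k\<in>{1..N}. c k * pmf R k) = b1 * measure_pmf.prob R D1 + b2 * measure_pmf.prob R D2"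
      unfolding sum_split probD using part by (auto simp: c_def sum_distrib_left intro!: sum.cong)
    ultimately show ?thesis by (simp only:)
  qed
  also have "\<dots> = (\<Sum>k\<in>{1..N}. ennreal (c k * pmf R k))"
    by (rule sum_ennreal[symmetric]) (simp add: cnn)
  also have "\<dots> = (\<Sum>k\<in>{1..N}. ennreal (c k * pmf R k) * (\<integral>\<^sup>+x. ennreal (LRv (x k)) \<partial>P 0))"
    by (intro sum.cong refl) (simp add: one)
  also have "\<dots> = (\<Sum>k\<in>{1..N}. (\<integral>\<^sup>+x. ennreal (c k * w x k) \<partial>P 0))"
  proof (rule sum.cong[OF refl])
    fix k
    show "ennreal (c k * pmf R k) * (\<integral>\<^sup>+x. ennreal (LRv (x k)) \<partial>P 0) = (\<integral>\<^sup>+x. ennreal (c k * w x k) \<partial>P 0)"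
      by (subst nn_integral_cmult[symmetric]) (auto simp: w_def ennreal_mult[symmetric] cnn LRsum_nonneg mult_ac intro!: nn_integral_cong)
  qed
  also have "\<dots> = (\<integral>\<^sup>+x. (\<Sum>k\<in>{1..N}. ennreal (c k * w x k)) \<partial>P 0)"
    by (rule nn_integral_sum[symmetric]) auto
  also have "\<dots> = (\<integral>\<^sup>+x. ennreal (\<Sum>k\<in>{1..N}. c k * w x k) \<partial>P 0)"
    using cnn wnn by (intro nn_integral_cong) (simp add: sum_ennreal)
  also have "\<dots> \<le> (\<integral>\<^sup>+x. ennreal (\<Sum>k\<in>{1..N}. (if k \<in> T x then w x k else 0)) \<partial>P 0)"
    using pw by (intro nn_integral_mono ennreal_leI) auto
  also have "\<dots> = (\<integral>\<^sup>+x. (\<Sum>k\<in>{1..N}. ennreal (indicator {x. (k, x) \<in> A} x * LRv (x k)) * ennreal (pmf R k)) \<partial>P 0)"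
  proof (intro nn_integral_cong)
    fix x
    have "ennreal (\<Sum>k\<in>{1..N}. (if k \<in> T x then w x k else 0)) = (\<Sum>k\<in>{1..N}. ennreal (if k \<in> T x then w x k else 0))"
      by (rule sum_ennreal[symmetric]) (simp add: wnn)
    also have "\<dots> = (\<Sum>k\<in>{1..N}. ennreal (indicator {x. (k, x) \<in> A} x * LRv (x k)) * ennreal (pmf R k))"
    proof (intro sum.cong refl)
      fix k
      show "ennreal (if k \<in> T x then w x k else 0) = ennreal (indicator {x. (k, x) \<in> A} x * LRv (x k)) * ennreal (pmf R k)"
      proof (cases "k \<in> T x")
        case True
        thus ?thesis unfolding A_def w_def using ennreal_mult[OF LRsum_nonneg pmf_nonneg] by simp
      next
        case False
        thus ?thesis unfolding A_def by simp
      qed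
    qed
    finally show "ennreal (\<Sum>k\<in>{1..N}. (if k \<in> T x then w x k else 0)) = (\<Sum>k\<in>{1..N}. ennreal (indicator {x. (k, x) \<in> A} x * LRv (x k)) * ennreal (pmf R k))" .
  qed
  also have "\<dots> = (\<Sum>k\<in>{1..N}. (\<integral>\<^sup>+x. ennreal (indicator {x. (k, x) \<in> A} x * LRv (x k)) \<partial>P 0) * ennreal (pmf R k))"
    by (subst nn_integral_sum) (auto simp: nn_integral_multc)
  also have "\<dots> = (\<Sum>k\<in>{1..N}. emeasure (P k) {x. (k, x) \<in> A} * ennreal (pmf R k))"
    by (intro sum.cong refl) (simp add: density)
  also have "\<dots> \<le> (\<Sum>k\<in>{0..N}. emeasure (P k) {x. (k, x) \<in> A} * ennreal (pmf R k))"
    by (intro sum_mono2) auto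
  also have "\<dots> = emeasure (joint N D1 R S1 G1 S2 G2) A" by (rule emJ[symmetric])
  also have "\<dots> = ennreal (measure (joint N D1 R S1 G1 S2 G2) A)"
    by (simp add: measure_pmf.emeasure_eq_measure)
  finally show ?thesis unfolding A_def
    by (subst (asm) ennreal_le_iff) (auto simp: measure_nonneg)
qed

end

theorem mainTheorem7:
  fixes N :: nat and D1 D2 :: "nat set" and R :: "nat pmf"
    and S1 G1 :: "'a pmf" and S2 G2 :: "'b pmf"
    and \<alpha>1 \<alpha>2 :: real and tb :: "nat \<Rightarrow> nat"
  assumes N: "N \<ge> 1"
    and part: "D1 \<union> D2 = {1..N}" "D1 \<inter> D2 = {}"
    and Rrange: "set_pmf R \<subseteq> {0..N}"
    and supp1: "\<And>e. pmf S1 e > 0 \<Longrightarrow> pmf G1 e > 0"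
    and supp2: "\<And>e. pmf S2 e > 0 \<Longrightarrow> pmf G2 e > 0"
    and posD: "measure_pmf.prob R {1..N} > 0"
    and a1: "0 < \<alpha>1" "\<alpha>1 \<le> 1"
    and a2: "0 < \<alpha>2" "\<alpha>2 \<le> 1"
    and tb: "inj_on tb {1..N}"
  shows
   "(let J = joint N D1 R S1 G1 S2 G2;
         LRv = LRsum S1 G1 S2 G2;
         pD = measure_pmf.prob R {1..N};
         rhs = \<alpha>1 * (measure_pmf.prob R D1 / pD) + \<alpha>2 * (measure_pmf.prob R D2 / pD);
         t1 = threshold S1 G1 \<alpha>1;
         t2 = threshold S2 G2 \<alpha>2;
         Dsel = (\<lambda>Dj \<alpha>j x. if measure_pmf.prob R Dj > 0
                   then top_segment Dj (\<lambda>i. LRv (x i) * pmf R i) tb \<alpha>j else {})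
     in
      measure_pmf.prob J
         {(k, x). (k \<in> D1 \<and> LRv (x k) \<ge> t1) \<or> (k \<in> D2 \<and> LRv (x k) \<ge> t2)} / pD \<ge> rhs
    \<and> measure_pmf.prob J
         {(k, x). k \<in> Dsel D1 \<alpha>1 x \<union> Dsel D2 \<alpha>2 x} / pD \<ge> rhs)"
  proof -
  interpret hsetup N D1 D2 R S1 G1 S2 G2
    using part Rrange supp1 supp2 by unfold_locales auto
  have A: "measure (joint N D1 R S1 G1 S2 G2)
     {(k, x). (k \<in> D1 \<and> LRsum S1 G1 S2 G2 (x k) \<ge> threshold S1 G1 \<alpha>1) \<or> (k \<in> D2 \<and> LRsum S1 G1 S2 G2 (x k) \<ge> threshold S2 G2 \<alpha>2)}
     \<ge> \<alpha>1 * measure_pmf.prob R D1 + \<alpha>2 * measure_pmf.prob R D2"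
    by (rule partA[OF a1 a2])
  have B: "measure (joint N D1 R S1 G1 S2 G2) {(k, x). k \<in> (if measure_pmf.prob R D1 > 0 then top_segment D1 (\<lambda>i. LRsum S1 G1 S2 G2 (x i) * pmf R i) tb \<alpha>1 else {})
              \<union> (if measure_pmf.prob R D2 > 0 then top_segment D2 (\<lambda>i. LRsum S1 G1 S2 G2 (x i) * pmf R i) tb \<alpha>2 else {})}
     \<ge> \<alpha>1 * measure_pmf.prob R D1 + \<alpha>2 * measure_pmf.prob R D2"
    by (rule partB[OF a1 a2 tb])
  have r: "\<alpha>1 * (measure_pmf.prob R D1 / measure_pmf.prob R {1..N}) + \<alpha>2 * (measure_pmf.prob R D2 / measure_pmf.prob R {1..N})
     = (\<alpha>1 * measure_pmf.prob R D1 + \<alpha>2 * measure_pmf.prob R D2) / measure_pmf.prob R {1..N}"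
    by (simp add: add_divide_distrib)
  show ?thesis unfolding Let_def r
    using divide_right_mono[OF A, of "measure_pmf.prob R {1..N}"] divide_right_mono[OF B, of "measure_pmf.prob R {1..N}"] posD
    by simp
qed

end
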